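(* Let $Y$ be an infinite-dimensional real Banach space. Then $\mathrm{A}(X,Y)\subsetneq\mathrm{Lip}_0(X,Y)$ for every nontrivial real Banach space $X$.
   Context: $\widetilde X=\{(x,y)\in X^2:x\neq y\}$. $\mathrm{Lip}_0(X,Y)$ is the Banach space of Lipschitz $f\colon X\to Y$ with $f(0)=0$ and norm $\|f\|=\sup_{(x,y)\in\widetilde X}\|f(x)-f(y)\|/\|x-y\|$. $\mathrm{A}(X,Y)$ is the set of $f\in\mathrm{Lip}_0(X,Y)$ for which there are $z\in Y$ with $\|z\|=\|f\|$ and $(x_n,y_n)\in\widetilde X$ with $\frac{f(x_n)-f(y_n)}{\|x_n-y_n\|}\to z$. *)

theory Defs
  imports "HOL-Analysis.Analysis"
begin

definition offdiag :: "('a \<times> 'a) set" where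
  "offdiag = {(x, y). x \<noteq> y}"

definition Lip0 :: "('a::real_normed_vector \<Rightarrow> 'b::real_normed_vector) set" where
  "Lip0 = {f. (\<exists>C. C-lipschitz_on UNIV f) \<and> f 0 = 0}"

definition lip_norm :: "('a::real_normed_vector \<Rightarrow> 'b::real_normed_vector) \<Rightarrow> real" where
  "lip_norm f = (SUP p\<in>offdiag. norm (f (fst p) - f (snd p)) / norm (fst p - snd p))"

definition Aset :: "('a::real_normed_vector \<Rightarrow> 'b::real_normed_vector) set" where
  "Aset = {f \<in> Lip0. \<exists>z. norm z = lip_norm f \<and>
     (\<exists>s :: nat \<Rightarrow> 'a \<times> 'a. (\<forall>n. s n \<in> offdiag) \<and>
        (\<lambda>n. (f (fst (s n)) - f (snd (s n))) /\<^sub>R norm (fst (s n) - snd (s n))) \<longlonglongrightarrow> z)}"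

end

theory Submission imports Defs begin

lemma closed_span_finite:
  fixes F :: "'b::real_normed_vector set"
  assumes "finite F" shows "closed (span F)"
  using assms
proof (induction F rule: finite_induct)
  case empty then show ?case by simp
next
  case (insert x F)
  show ?case
  proof (cases "x \<in> span F")
    case True
    then have "span (insert x F) = span F" by (simp add: span_redundant)
    then show ?thesis using insert by simp
  next
    case False
    define S where "S = span F"
    have cS: "closed S" "S \<noteq> {}" using insert S_def span_zero by auto
    define d where "d = infdist x S"
    have dpos: "d > 0" unfolding d_def using infdist_pos_not_in_closed[OF cS] False S_def by auto
    have key: "\<bar>t\<bar> * d \<le> norm (s + t *\<^sub>R x)" if "s \<in> S" for s t
    proof (cases "t = 0")
      case True then show ?thesis by simp
    next
      case False
      have m: "- (1/t) *\<^sub>R s \<in> S" using that S_def by (simp add: span_scale span_neg)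
      have "d \<le> dist x (- (1/t) *\<^sub>R s)" unfolding d_def by (rule infdist_le[OF m])
      also have "\<dots> = norm (x + (1/t) *\<^sub>R s)" by (simp add: dist_norm)
      also have "(x + (1/t) *\<^sub>R s) = (1/t) *\<^sub>R (s + t *\<^sub>R x)" using False
        by (simp add: algebra_simps)
      finally have "d \<le> norm (s + t *\<^sub>R x) / \<bar>t\<bar>" by simp
      then show ?thesis using False by (simp add: field_simps)
    qed
    show ?thesis
    proof (subst closed_sequential_limits, intro allI impI, elim conjE)
      fix u l assume u: "\<forall>n. u n \<in> span (insert x F)" and ul: "u \<longlonglongrightarrow> l"
      have "\<forall>n. \<exists>t. u n - t *\<^sub>R x \<in> S" using u S_def span_breakdown_eq by blast
      then obtain t where t: "\<And>n. u n - t n *\<^sub>R x \<in> S" by metis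
      have tb: "\<bar>t n - t m\<bar> * d \<le> norm (u n - u m)" for n m
      proof -
        have "(u n - t n *\<^sub>R x) - (u m - t m *\<^sub>R x) \<in> S" using t S_def by (simp add: span_diff)
        from key[OF this, of "t n - t m"] show ?thesis by (simp add: algebra_simps)
      qed
      have "Cauchy u" using ul by (rule LIMSEQ_imp_Cauchy)
      have "Cauchy t"
      proof (rule CauchyI)
        fix e :: real assume "e > 0"
        then have "e * d > 0" using dpos by simp
        with \<open>Cauchy u\<close> obtain M where M: "\<And>m n. m \<ge> M \<Longrightarrow> n \<ge> M \<Longrightarrow> norm (u m - u n) < e * d"
          unfolding Cauchy_def dist_norm by blast
        show "\<exists>M. \<forall>m\<ge>M. \<forall>n\<ge>M. norm (t m - t n) < e"
        proof (intro exI allI impI)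
          fix m n assume "m \<ge> M" "n \<ge> M"
          then have "\<bar>t m - t n\<bar> * d < e * d" using tb[of m n] M[of m n] by linarith
          then show "norm (t m - t n) < e" using dpos by simp
        qed
      qed
      then obtain \<tau> where "t \<longlonglongrightarrow> \<tau>" using Cauchy_convergent_iff convergent_def by blast
      then have "(\<lambda>n. u n - t n *\<^sub>R x) \<longlonglongrightarrow> l - \<tau> *\<^sub>R x"
        by (intro tendsto_intros ul)
      then have "l - \<tau> *\<^sub>R x \<in> S" by (rule closed_sequentially[OF cS(1) t])
      then show "l \<in> span (insert x F)" unfolding S_def span_breakdown_eq by blast
    qed
  qed
qed

lemma riesz_step:
  fixes F :: "'b::real_normed_vector set"
  assumes "finite F" "span F \<noteq> UNIV"
  shows "\<exists>e. norm e = 1 \<and> (\<forall>v\<in>span F. 1/2 \<le> norm (e - v))"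
proof -
  define S where "S = span F"
  have cS: "closed S" "S \<noteq> {}" using closed_span_finite[OF assms(1)] S_def span_zero by auto
  obtain y where y: "y \<notin> S" using assms(2) S_def by auto
  define d where "d = infdist y S"
  have dpos: "d > 0" unfolding d_def using infdist_pos_not_in_closed[OF cS y] .
  have "infdist y S < 2 * d" using dpos d_def by simp
  have "\<exists>s\<in>S. dist y s < 2 * d"
  proof (rule ccontr)
    assume "\<not> ?thesis"
    then have h: "\<And>s. s \<in> S \<Longrightarrow> 2 * d \<le> dist y s" by (simp add: not_less)
    have "2 * d \<le> infdist y S" unfolding infdist_notempty[OF cS(2)]
      by (rule cINF_greatest[OF cS(2) h])
    then show False using dpos d_def by simp
  qed
  then obtain s0 where s0: "s0 \<in> S" "dist y s0 < 2 * d" by blast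
  define r where "r = norm (y - s0)"
  have rpos: "r > 0" using y s0 r_def by auto
  have r2: "r < 2 * d" using s0 r_def by (simp add: dist_norm)
  define e where "e = (1/r) *\<^sub>R (y - s0)"
  have ne: "norm e = 1" using rpos r_def e_def by simp
  have "1/2 \<le> norm (e - v)" if v: "v \<in> S" for v
  proof -
    have m: "s0 + r *\<^sub>R v \<in> S" using v s0 S_def by (simp add: span_add span_scale)
    have "d \<le> dist y (s0 + r *\<^sub>R v)" unfolding d_def by (rule infdist_le[OF m])
    also have "\<dots> = norm (r *\<^sub>R (e - v))" using rpos unfolding e_def dist_norm
      by (simp add: algebra_simps)
    also have "\<dots> = r * norm (e - v)" using rpos by simp
    finally have "d \<le> r * norm (e - v)" .
    show ?thesis
    proof (rule ccontr)
      assume "\<not> ?thesis"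
      then have "norm (e - v) \<le> 1/2" by simp
      then have "r * norm (e - v) \<le> r * (1/2)" using rpos by (intro mult_left_mono) auto
      then show False using r2 \<open>d \<le> r * norm (e - v)\<close> by linarith
    qed
  qed
  then show ?thesis using ne S_def by blast
qed


definition Rch :: "'b::real_normed_vector set \<Rightarrow> 'b" where
  "Rch F = (SOME e. norm e = 1 \<and> (\<forall>v\<in>span F. 1/2 \<le> norm (e - v)))"

lemma Rch_prop:
  fixes F :: "'b::real_normed_vector set"
  assumes "finite F" "span F \<noteq> UNIV"
  shows "norm (Rch F) = 1 \<and> (\<forall>v\<in>span F. 1/2 \<le> norm (Rch F - v))"
  unfolding Rch_def by (rule someI_ex, rule riesz_step[OF assms])

primrec Lset :: "nat \<Rightarrow> 'b::real_normed_vector set" where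
  "Lset 0 = {}"
| "Lset (Suc n) = insert (Rch (Lset n)) (Lset n)"

definition Eseq :: "nat \<Rightarrow> 'b::real_normed_vector" where
  "Eseq k = Rch (Lset k)"

lemma finite_Lset: "finite (Lset k)"
  by (induction k) auto

lemma Eseq_in_Lset: "j < k \<Longrightarrow> Eseq j \<in> Lset k"
proof (induction k)
  case 0 then show ?case by simp
next
  case (Suc k)
  show ?case
  proof (cases "j = k")
    case True then show ?thesis by (simp add: Eseq_def)
  next
    case False then have "j < k" using Suc.prems by simp
    then show ?thesis using Suc.IH by simp
  qed
qed

lemma Eseq_props:
  assumes "\<not> (\<exists>B :: 'b::real_normed_vector set. finite B \<and> span B = UNIV)"
  shows "norm (Eseq k :: 'b) = 1 \<and> (\<forall>v\<in>span (Lset k :: 'b set). 1/2 \<le> norm (Eseq k - v))"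
proof -
  have "span (Lset k :: 'b set) \<noteq> UNIV" using assms finite_Lset by blast
  from Rch_prop[OF finite_Lset this] show ?thesis
    unfolding Eseq_def .
qed

lemma Eseq_sep:
  assumes "\<not> (\<exists>B :: 'b::real_normed_vector set. finite B \<and> span B = UNIV)" "j < k"
  shows "1/2 \<le> norm ((Eseq k :: 'b) - c *\<^sub>R Eseq j)"
proof -
  have "c *\<^sub>R Eseq j \<in> span (Lset k :: 'b set)"
    using Eseq_in_Lset[OF assms(2)] by (intro span_mul span_base)
  then show ?thesis using Eseq_props[OF assms(1), of k] by auto
qed

definition sq :: "nat \<Rightarrow> real" where "sq k = 1 - 1 / (real k + 2)"
definition tent :: "real \<Rightarrow> real" where "tent u = max 0 (1/2 - \<bar>u - 1\<bar>)"
definition kk :: "real \<Rightarrow> nat" where "kk t = nat \<lfloor>t / 2\<rfloor>"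
definition gfun :: "(nat \<Rightarrow> 'b::real_normed_vector) \<Rightarrow> real \<Rightarrow> 'b" where
  "gfun E t = (sq (kk t) * tent (t - 2 * real (kk t))) *\<^sub>R E (kk t)"

lemma sq_bounds: "1/2 \<le> sq k" "sq k < 1"
  by (auto simp: sq_def field_simps)

lemma sq_mono: "j \<le> k \<Longrightarrow> sq j \<le> sq k"
  by (auto simp: sq_def field_simps)

lemma kk_bounds: assumes "t \<ge> 0" shows "2 * real (kk t) \<le> t" "t < 2 * real (kk t) + 2"
proof -
  have "real (kk t) = of_int \<lfloor>t/2\<rfloor>" using assms by (simp add: kk_def)
  then show "2 * real (kk t) \<le> t" "t < 2 * real (kk t) + 2"
    using floor_le_iff[of "t/2"] by linarith+
qed

lemma kk_eq: "kk (2 * real k + c) = k" if "0 \<le> c" "c < 2"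
proof -
  have "\<lfloor>(2 * real k + c) / 2\<rfloor> = int k"
    using that by (intro floor_unique) (auto simp: field_simps)
  then show ?thesis by (simp add: kk_def)
qed

lemma tent_lip: "\<bar>tent x - tent y\<bar> \<le> \<bar>x - y\<bar>"
  unfolding tent_def by arith

lemma cross_bound:
  fixes E :: "nat \<Rightarrow> 'b::real_normed_vector"
  assumes E: "\<And>k. norm (E k) = 1" and "a \<ge> 0" "b \<ge> 0" "kk a < kk b"
  shows "norm (gfun E a - gfun E b) \<le> 2/3 * \<bar>a - b\<bar>"
proof -
  define A where "A = 2 * real (kk a)"
  define B where "B = 2 * real (kk b)"
  have AB: "A + 2 \<le> B" using assms(4) unfolding A_def B_def by simp
  have a: "A \<le> a" "a < A + 2" using kk_bounds[OF assms(2)] A_def by auto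
  have b: "B \<le> b" "b < B + 2" using kk_bounds[OF assms(3)] B_def by auto
  have ga: "norm (gfun E a) \<le> tent (a - A)"
  proof -
    have t0: "0 \<le> tent (a - A)" unfolding tent_def by simp
    have s0: "0 \<le> sq (kk a)" "sq (kk a) \<le> 1" using sq_bounds[of "kk a"] by linarith+
    have "norm (gfun E a) = sq (kk a) * tent (a - A)"
      unfolding gfun_def A_def using E t0 s0 A_def by (simp add: abs_mult)
    also have "\<dots> \<le> 1 * tent (a - A)" by (rule mult_right_mono[OF s0(2) t0])
    finally show ?thesis by simp
  qed
  have gb: "norm (gfun E b) \<le> tent (b - B)"
  proof -
    have t0: "0 \<le> tent (b - B)" unfolding tent_def by simp
    have s0: "0 \<le> sq (kk b)" "sq (kk b) \<le> 1" using sq_bounds[of "kk b"] by linarith+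
    have "norm (gfun E b) = sq (kk b) * tent (b - B)"
      unfolding gfun_def B_def using E t0 s0 B_def by (simp add: abs_mult)
    also have "\<dots> \<le> 1 * tent (b - B)" by (rule mult_right_mono[OF s0(2) t0])
    finally show ?thesis by simp
  qed
  have p: "tent (a - A) \<le> 1/2" "tent (a - A) \<le> 0 \<or> tent (a - A) \<le> A + 3/2 - a"
    unfolding tent_def by (auto simp: max_def abs_if)
  have q: "tent (b - B) \<le> 1/2" "tent (b - B) \<le> 0 \<or> tent (b - B) \<le> b - B - 1/2"
    unfolding tent_def by (auto simp: max_def abs_if)
  have ab: "\<bar>a - b\<bar> = b - a" using a b AB by simp
  have "tent (a - A) + tent (b - B) \<le> 2/3 * b - 2/3 * a"
    using p(2) q(2)
  proof (elim disjE)
    assume "tent (a - A) \<le> 0" "tent (b - B) \<le> 0"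
    then show ?thesis using a b AB by linarith
  next
    assume "tent (a - A) \<le> 0" "tent (b - B) \<le> b - B - 1/2"
    then show ?thesis using a b AB q(1) by (cases "b - a \<ge> 3/4"; linarith)
  next
    assume "tent (a - A) \<le> A + 3/2 - a" "tent (b - B) \<le> 0"
    then show ?thesis using a b AB p(1) by (cases "b - a \<ge> 3/4"; linarith)
  next
    assume "tent (a - A) \<le> A + 3/2 - a" "tent (b - B) \<le> b - B - 1/2"
    then show ?thesis using a b AB p(1) q(1) by (cases "b - a \<ge> 3/2"; linarith)
  qed
  then have "tent (a - A) + tent (b - B) \<le> 2/3 * \<bar>a - b\<bar>"
    unfolding ab by (simp add: algebra_simps)
  moreover have "norm (gfun E a - gfun E b) \<le> norm (gfun E a) + norm (gfun E b)"
    by (rule norm_triangle_ineq4)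
  ultimately show ?thesis using ga gb by linarith
qed

lemma G:
  fixes E :: "nat \<Rightarrow> 'b::real_normed_vector"
  assumes E: "\<And>k. norm (E k) = 1" and "a \<ge> 0" "b \<ge> 0"
  shows "(\<exists>c. gfun E a - gfun E b = c *\<^sub>R E (kk a) \<and> \<bar>c\<bar> \<le> sq (kk a) * \<bar>a - b\<bar>)
     \<or> norm (gfun E a - gfun E b) \<le> 2/3 * \<bar>a - b\<bar>"
proof (cases "kk a = kk b")
  case True
  define k where "k = kk a"
  define c where "c = sq k * (tent (a - 2 * real k) - tent (b - 2 * real k))"
  have "gfun E a - gfun E b = c *\<^sub>R E (kk a)"
    unfolding gfun_def c_def k_def using True by (simp add: algebra_simps)
  moreover have "\<bar>c\<bar> \<le> sq (kk a) * \<bar>a - b\<bar>"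
  proof -
    have s0: "0 \<le> sq (kk a)" using sq_bounds(1)[of "kk a"] by linarith
    have tl: "\<bar>tent (a - 2 * real k) - tent (b - 2 * real k)\<bar> \<le> \<bar>a - b\<bar>"
      using tent_lip[of "a - 2 * real k" "b - 2 * real k"] by simp
    have "\<bar>c\<bar> = sq (kk a) * \<bar>tent (a - 2 * real k) - tent (b - 2 * real k)\<bar>"
      unfolding c_def k_def abs_mult using s0 by simp
    also have "\<dots> \<le> sq (kk a) * \<bar>a - b\<bar>" by (rule mult_left_mono[OF tl s0])
    finally show ?thesis .
  qed
  ultimately show ?thesis by blast
next
  case False
  then have "kk a < kk b \<or> kk b < kk a" by auto
  then show ?thesis
  proof
    assume "kk a < kk b" then show ?thesis using cross_bound[of E, OF E assms(2,3)] by blast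
  next
    assume "kk b < kk a"
    then have "norm (gfun E b - gfun E a) \<le> 2/3 * \<bar>b - a\<bar>"
      using cross_bound[of E, OF E assms(3,2)] by blast
    then show ?thesis by (simp add: norm_minus_commute abs_minus_commute)
  qed
qed


lemma gdiff_le:
  fixes E :: "nat \<Rightarrow> 'b::real_normed_vector"
  assumes E: "\<And>k. norm (E k) = 1" and "a \<ge> 0" "b \<ge> 0"
  shows "norm (gfun E a - gfun E b) \<le> \<bar>a - b\<bar>"
  using G[of E, OF E assms(2,3)]
proof
  assume "\<exists>c. gfun E a - gfun E b = c *\<^sub>R E (kk a) \<and> \<bar>c\<bar> \<le> sq (kk a) * \<bar>a - b\<bar>"
  then obtain c where c: "gfun E a - gfun E b = c *\<^sub>R E (kk a)" "\<bar>c\<bar> \<le> sq (kk a) * \<bar>a - b\<bar>" by blast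
  have "sq (kk a) * \<bar>a - b\<bar> \<le> 1 * \<bar>a - b\<bar>"
    using sq_bounds(2)[of "kk a"] by (intro mult_right_mono) auto
  then show ?thesis using c E by simp
next
  assume "norm (gfun E a - gfun E b) \<le> 2/3 * \<bar>a - b\<bar>"
  moreover have "2/3 * t \<le> t" if "0 \<le> t" for t :: real using that by linarith
  ultimately show ?thesis using order_trans abs_ge_zero by blast
qed

lemma quot:
  fixes E :: "nat \<Rightarrow> 'b::real_normed_vector" and x y :: "'a::real_normed_vector"
  assumes E: "\<And>k. norm (E k) = 1" and xy: "x \<noteq> y"
  shows "norm ((gfun E (norm x) - gfun E (norm y)) /\<^sub>R norm (x - y)) \<le> 2/3
    \<or> (\<exists>k c. (gfun E (norm x) - gfun E (norm y)) /\<^sub>R norm (x - y) = c *\<^sub>R E k \<and> \<bar>c\<bar> \<le> sq k)"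
proof -
  define n where "n = norm (x - y)"
  have npos: "n > 0" using xy n_def by simp
  have h: "\<bar>norm x - norm y\<bar> \<le> n" unfolding n_def by (rule norm_triangle_ineq3)
  from G[of E, OF E norm_ge_zero norm_ge_zero, of x y]
  show ?thesis
  proof
    assume "\<exists>c. gfun E (norm x) - gfun E (norm y) = c *\<^sub>R E (kk (norm x)) \<and> \<bar>c\<bar> \<le> sq (kk (norm x)) * \<bar>norm x - norm y\<bar>"
    then obtain c where c: "gfun E (norm x) - gfun E (norm y) = c *\<^sub>R E (kk (norm x))"
      "\<bar>c\<bar> \<le> sq (kk (norm x)) * \<bar>norm x - norm y\<bar>" by blast
    have q: "(gfun E (norm x) - gfun E (norm y)) /\<^sub>R norm (x - y) = (c / n) *\<^sub>R E (kk (norm x))"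
      unfolding c(1) n_def by (simp add: divide_inverse ac_simps)
    have s0: "0 \<le> sq (kk (norm x))" using sq_bounds(1)[of "kk (norm x)"] by linarith
    have "\<bar>c\<bar> \<le> sq (kk (norm x)) * n"
      using c(2) mult_left_mono[OF h s0] by linarith
    then have "\<bar>c\<bar> / n \<le> sq (kk (norm x))" by (simp add: pos_divide_le_eq[OF npos])
    then have "\<bar>c / n\<bar> \<le> sq (kk (norm x))" using npos by (simp add: abs_divide)
    then show ?thesis using q by blast
  next
    assume a: "norm (gfun E (norm x) - gfun E (norm y)) \<le> 2/3 * \<bar>norm x - norm y\<bar>"
    have "2/3 * \<bar>norm x - norm y\<bar> \<le> 2/3 * n" using h by (intro mult_left_mono) auto
    then have "norm (gfun E (norm x) - gfun E (norm y)) \<le> 2/3 * n" using a by (rule order_trans[rotated])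
    then have "norm (gfun E (norm x) - gfun E (norm y)) / n \<le> 2/3" using pos_divide_le_eq[OF npos] by simp
    moreover have "norm ((gfun E (norm x) - gfun E (norm y)) /\<^sub>R norm (x - y)) = norm (gfun E (norm x) - gfun E (norm y)) / n"
      unfolding n_def using npos n_def by (simp add: divide_inverse_commute)
    ultimately show ?thesis by simp
  qed
qed


lemma gfun_0: "gfun E 0 = 0"
  by (simp add: gfun_def kk_def tent_def)

lemma f_Lip0:
  fixes E :: "nat \<Rightarrow> 'b::real_normed_vector"
  assumes E: "\<And>k. norm (E k) = 1"
  shows "(\<lambda>x::'a::real_normed_vector. gfun E (norm x)) \<in> Lip0"
proof -
  have "1-lipschitz_on UNIV (\<lambda>x::'a. gfun E (norm x))"
  proof (rule lipschitz_onI)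
    fix x y :: 'a
    have "norm (gfun E (norm x) - gfun E (norm y)) \<le> \<bar>norm x - norm y\<bar>"
      by (rule gdiff_le[of E, OF E norm_ge_zero norm_ge_zero])
    also have "\<dots> \<le> norm (x - y)" by (rule norm_triangle_ineq3)
    finally show "dist (gfun E (norm x)) (gfun E (norm y)) \<le> 1 * dist x y"
      by (simp add: dist_norm)
  qed simp
  then show ?thesis unfolding Lip0_def by (auto simp: gfun_0)
qed

lemma f_quot_le1:
  fixes E :: "nat \<Rightarrow> 'b::real_normed_vector" and x y :: "'a::real_normed_vector"
  assumes E: "\<And>k. norm (E k) = 1" and "x \<noteq> y"
  shows "norm (gfun E (norm x) - gfun E (norm y)) / norm (x - y) \<le> 1"
proof -
  have "norm (gfun E (norm x) - gfun E (norm y)) \<le> \<bar>norm x - norm y\<bar>"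
    by (rule gdiff_le[of E, OF E norm_ge_zero norm_ge_zero])
  also have "\<dots> \<le> norm (x - y)" by (rule norm_triangle_ineq3)
  finally show ?thesis using assms(2) by (simp add: divide_le_eq)
qed

lemma lipnorm_f:
  fixes E :: "nat \<Rightarrow> 'b::real_normed_vector"
  assumes E: "\<And>k. norm (E k) = 1" and X: "\<exists>x :: 'a::real_normed_vector. x \<noteq> 0"
  shows "lip_norm (\<lambda>x::'a. gfun E (norm x)) = 1"
proof -
  define f where "f = (\<lambda>x::'a. gfun E (norm x))"
  define Q where "Q = (\<lambda>p. norm (f (fst p) - f (snd p)) / norm (fst p - snd p))"
  have L: "lip_norm f = (SUP p\<in>offdiag. Q p)" unfolding lip_norm_def Q_def ..
  obtain x0 :: 'a where x0: "x0 \<noteq> 0" using X by blast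
  define u where "u = (1 / norm x0) *\<^sub>R x0"
  have nu: "norm u = 1" using x0 u_def by simp
  have "(x0, 0) \<in> offdiag" using x0 by (simp add: offdiag_def)
  then have ne: "(offdiag :: ('a \<times> 'a) set) \<noteq> {}" by blast
  have Q1: "Q p \<le> 1" if "p \<in> offdiag" for p
  proof -
    obtain x y where p: "p = (x, y)" by (cases p)
    have "x \<noteq> y" using that p by (simp add: offdiag_def)
    then show ?thesis unfolding Q_def f_def p fst_conv snd_conv by (rule f_quot_le1[of E, OF E])
  qed
  have bdd: "bdd_above (Q ` offdiag)" using Q1 by (rule bdd_aboveI2)
  have up: "lip_norm f \<le> 1" unfolding L using Q1 by (rule cSUP_least[OF ne])
  have low: "sq k \<le> lip_norm f" for k
  proof -
    define x where "x = (2 * real k + 1) *\<^sub>R u"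
    define y where "y = (2 * real k + 1/2) *\<^sub>R u"
    have nx: "norm x = 2 * real k + 1" unfolding x_def using nu by simp
    have ny: "norm y = 2 * real k + 1/2" unfolding y_def using nu by simp
    have xy: "x - y = (1/2) *\<^sub>R u" unfolding x_def y_def
      by (simp add: scaleR_left_diff_distrib[symmetric])
    have k1: "kk (2 * real k + 1) = k" by (rule kk_eq) auto
    have k2: "kk (2 * real k + 1/2) = k" by (rule kk_eq) auto
    have gx: "gfun E (2 * real k + 1) = (sq k * (1/2)) *\<^sub>R E k"
      unfolding gfun_def k1 by (simp add: tent_def)
    have gy: "gfun E (2 * real k + 1/2) = 0"
      unfolding gfun_def k2 by (simp add: tent_def)
    have "Q (x, y) = sq k"
      unfolding Q_def f_def fst_conv snd_conv nx ny gx gy xy using nu E sq_bounds(1)[of k]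
      by simp
    moreover have "(x, y) \<in> offdiag" unfolding offdiag_def using xy nu by auto
    ultimately show ?thesis unfolding L using cSUP_upper[OF _ bdd] by metis
  qed
  have "1 \<le> lip_norm f"
  proof (rule ccontr)
    assume "\<not> 1 \<le> lip_norm f"
    then have lt: "lip_norm f < 1" by simp
    obtain n :: nat where n: "1 / (1 - lip_norm f) < real n" using reals_Archimedean2 by blast
    have pos: "1 - lip_norm f > 0" using lt by simp
    have "1 < (1 - lip_norm f) * real n" using n pos by (simp add: divide_less_eq mult.commute)
    also have "\<dots> \<le> (1 - lip_norm f) * (real n + 2)" using pos by (intro mult_left_mono) auto
    finally have "1 / (real n + 2) < 1 - lip_norm f" by (simp add: divide_less_eq)
    then have "lip_norm f < sq n" unfolding sq_def by linarith
    with low[of n] show False by simp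
  qed
  with up show ?thesis unfolding f_def by simp
qed


lemma notA:
  fixes E :: "nat \<Rightarrow> 'b::real_normed_vector"
  assumes E: "\<And>k. norm (E k) = 1"
    and sep: "\<And>j k c. j < k \<Longrightarrow> 1/2 \<le> norm (E k - c *\<^sub>R E j)"
    and X: "\<exists>x :: 'a::real_normed_vector. x \<noteq> 0"
  shows "(\<lambda>x::'a. gfun E (norm x)) \<notin> Aset"
proof
  define f where "f = (\<lambda>x::'a. gfun E (norm x))"
  assume "(\<lambda>x::'a. gfun E (norm x)) \<in> Aset"
  then have "f \<in> Aset" unfolding f_def .
  then obtain z s where z: "norm z = lip_norm f" and s: "\<forall>n. s n \<in> offdiag"
    and lim: "(\<lambda>n. (f (fst (s n)) - f (snd (s n))) /\<^sub>R norm (fst (s n) - snd (s n))) \<longlonglongrightarrow> z"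
    unfolding Aset_def by blast
  define q where "q = (\<lambda>n. (f (fst (s n)) - f (snd (s n))) /\<^sub>R norm (fst (s n) - snd (s n)))"
  have lim': "q \<longlonglongrightarrow> z" using lim unfolding q_def .
  have nz: "norm z = 1" using z lipnorm_f[of E, OF E X] unfolding f_def by simp
  have dich: "norm (q n) \<le> 2/3 \<or> (\<exists>k c. q n = c *\<^sub>R E k \<and> \<bar>c\<bar> \<le> sq k)" for n
  proof -
    have "fst (s n) \<noteq> snd (s n)" using s unfolding offdiag_def by (auto simp: case_prod_beta)
    from quot[of E, OF E this] show ?thesis unfolding q_def f_def .
  qed
  have nq: "(\<lambda>n. norm (q n)) \<longlonglongrightarrow> 1" using tendsto_norm[OF lim'] nz by simp
  have ev1: "eventually (\<lambda>n. norm (q n - z) < 1/8) sequentially"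
  proof -
    have "\<forall>e>0. eventually (\<lambda>n. norm (q n - z) < e) sequentially"
      using lim' unfolding tendsto_iff dist_norm .
    then show ?thesis by (meson zero_less_divide_1_iff zero_less_numeral)
  qed
  have ev2: "eventually (\<lambda>n. 7/8 < norm (q n)) sequentially"
    by (rule order_tendstoD(1)[OF nq]) simp
  obtain N where N: "\<And>n. n \<ge> N \<Longrightarrow> norm (q n - z) < 1/8 \<and> 7/8 < norm (q n)"
    using eventually_conj[OF ev1 ev2] unfolding eventually_sequentially by blast
  have "\<not> norm (q N) \<le> 2/3" using N[of N] by simp
  then obtain k0 c0 where k0: "q N = c0 *\<^sub>R E k0" "\<bar>c0\<bar> \<le> sq k0" using dich[of N] by blast
  have "eventually (\<lambda>n. sq k0 < norm (q n)) sequentially"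
    using order_tendstoD(1)[OF nq sq_bounds(2)[of k0]] .
  then obtain N2 where N2: "\<And>n. n \<ge> N2 \<Longrightarrow> sq k0 < norm (q n)"
    unfolding eventually_sequentially by blast
  define m where "m = max N N2"
  have m1: "norm (q m - z) < 1/8" "7/8 < norm (q m)" using N[of m] m_def by auto
  have m2: "sq k0 < norm (q m)" using N2[of m] m_def by auto
  have "\<not> norm (q m) \<le> 2/3" using m1 by simp
  then obtain k1 c1 where k1: "q m = c1 *\<^sub>R E k1" "\<bar>c1\<bar> \<le> sq k1" using dich[of m] by blast
  have nc1: "norm (q m) = \<bar>c1\<bar>" using k1 E by simp
  have "k0 < k1"
  proof (rule ccontr)
    assume "\<not> k0 < k1"
    then have "sq k1 \<le> sq k0" using sq_mono by simp
    then show False using m2 nc1 k1(2) by linarith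
  qed
  have c1pos: "7/8 < \<bar>c1\<bar>" using m1 nc1 by simp
  then have c1nz: "c1 \<noteq> 0" by auto
  have "norm (q m - q N) \<le> norm (q m - z) + norm (q N - z)"
    using norm_triangle_ineq4[of "q m - z" "q N - z"] by simp
  then have small: "norm (q m - q N) < 1/4" using m1(1) N[of N] by simp
  have "q m - q N = c1 *\<^sub>R (E k1 - (c0 / c1) *\<^sub>R E k0)"
    unfolding k0(1) k1(1) using c1nz by (simp add: algebra_simps)
  then have "norm (q m - q N) = \<bar>c1\<bar> * norm (E k1 - (c0 / c1) *\<^sub>R E k0)" by simp
  also have "\<dots> \<ge> \<bar>c1\<bar> * (1/2)"
    using sep[OF \<open>k0 < k1\<close>, of "c0 / c1"] by (intro mult_left_mono) auto
  finally have "\<bar>c1\<bar> * (1/2) \<le> norm (q m - q N)" .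
  then show False using small c1pos by linarith
qed

theorem proposition2p7:
  assumes "\<not> (\<exists>B :: 'b::banach set. finite B \<and> span B = UNIV)"
    and "\<exists>x :: 'a::banach. x \<noteq> 0"
  shows "(Aset :: ('a \<Rightarrow> 'b) set) \<subset> Lip0"
proof -
  define E where "E = (Eseq :: nat \<Rightarrow> 'b)"
  have En: "\<And>k. norm (E k) = 1" using Eseq_props[OF assms(1)] E_def by blast
  have sep: "\<And>j k c. j < k \<Longrightarrow> 1/2 \<le> norm (E k - c *\<^sub>R E j)"
    using Eseq_sep[OF assms(1)] E_def by blast
  have sub: "(Aset :: ('a \<Rightarrow> 'b) set) \<subseteq> Lip0" unfolding Aset_def by auto
  have "(\<lambda>x::'a. gfun E (norm x)) \<in> Lip0" by (rule f_Lip0[of E, OF En])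
  moreover have "(\<lambda>x::'a. gfun E (norm x)) \<notin> Aset" by (rule notA[of E, OF En sep assms(2)])
  ultimately show ?thesis using sub by blast
qed

end
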